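(* Let $I\subset\mathbb{R}$ be an open interval, let $\bm{a}:I\to\mathbb{R}^2_1$ be a (spacelike or timelike) frontal with Gauss mapping $\bm{\nu}:I\to H^1$ (or $S^1_1$), and let $r:I\to\mathbb{R}^+$ be a smooth positive function. Then the pseudo-circle family $C_{(\bm{a}(t),\pm r(t))}$ creates an envelope if and only if $C_{(\bm{a}(t),\pm r(t))}$ is creative.
   Context: All objects are $C^\infty$. The Minkowski plane $\mathbb{R}^2_1$ is $\mathbb{R}^2$ with the pseudo-scalar product $\langle\bm{x},\bm{y}\rangle=-x_1y_1+x_2y_2$. Set $S^1_1=\{\bm{x}:\langle\bm{x},\bm{x}\rangle=1\}$ and $H^1=\{\bm{x}:\langle\bm{x},\bm{x}\rangle=-1\}$. For a non-lightlike vector $\bm{x}$, $\epsilon_{\bm{x}}=1$ if $\langle\bm{x},\bm{x}\rangle>0$ and $\epsilon_{\bm{x}}=-1$ if $\langle\bm{x},\bm{x}\rangle<0$. A smooth curve $\bm{a}:I\to\mathbb{R}^2_1$ is a spacelike (resp. timelike) frontal if there is a smooth map $\bm{\nu}:I\to H^1$ (resp. $S^1_1$), the Gauss mapping, with $\langle \frac{d\bm{a}}{dt}(t),\bm{\nu}(t)\rangle=0$ for all $t$. Let $\bm{\mu}:I\to S^1_1$ (resp. $H^1$) be a smooth unit vector field with $\langle\bm{\mu},\bm{\nu}\rangle=0$; then $\frac{d\bm{a}}{dt}(t)=\beta(t)\bm{\mu}(t)$ where $\beta(t)=\epsilon_{\bm{\mu}}\langle\bm{\mu}(t),\frac{d\bm{a}}{dt}(t)\rangle$.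 For a positive function $r$, the pseudo-circle families are $C_{(\bm{a}(t),r(t))}=\{\bm{x}:\langle\bm{x}-\bm{a}(t),\bm{x}-\bm{a}(t)\rangle=r(t)^2\}$ and $C_{(\bm{a}(t),-r(t))}=\{\bm{x}:\langle\bm{x}-\bm{a}(t),\bm{x}-\bm{a}(t)\rangle=-r(t)^2\}$. An envelope of $C_{(\bm{a}(t),\pm r(t))}$ is a smooth map $f:I\to\mathbb{R}^2_1$ with (1) $f(t)\in C_{(\bm{a}(t),\pm r(t))}$ and (2) $\langle\frac{df}{dt}(t),f(t)-\bm{a}(t)\rangle=0$ for all $t\in I$. The family $C_{(\bm{a}(t),r(t))}$ is creative if there is a smooth $\tilde{\bm{\nu}}:I\to S^1_1$ with $\frac{dr}{dt}(t)+\beta(t)\langle\tilde{\bm{\nu}}(t),\bm{\mu}(t)\rangle=0$ for all $t$; the family $C_{(\bm{a}(t),-r(t))}$ is creative if there is a smooth $\tilde{\bm{\nu}}:I\to H^1$ with $\frac{dr}{dt}(t)-\beta(t)\langle\tilde{\bm{\nu}}(t),\bm{\mu}(t)\rangle=0$ for all $t$. *)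

theory Defs
  imports "HOL-Analysis.Analysis"
begin

text \<open>The Minkowski plane R^2_1 is modelled as real \<times> real.\<close>

type_synonym vec2 = "real \<times> real"

definition mink :: "vec2 \<Rightarrow> vec2 \<Rightarrow> real" where
  "mink x y = - fst x * fst y + snd x * snd y"

definition S11 :: "vec2 set" where
  "S11 = {x. mink x x = 1}"

definition H1 :: "vec2 set" where
  "H1 = {x. mink x x = -1}"

definition eps :: "vec2 \<Rightarrow> real" where
  "eps x = (if mink x x > 0 then 1 else -1)"

definition nderiv :: "nat \<Rightarrow> (real \<Rightarrow> 'a::real_normed_vector) \<Rightarrow> real \<Rightarrow> 'a" where
  "nderiv n f = ((\<lambda>g t. vector_derivative g (at t)) ^^ n) f"

definition smooth_on :: "real set \<Rightarrow> (real \<Rightarrow> 'a::real_normed_vector) \<Rightarrow> bool" where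
  "smooth_on I f \<longleftrightarrow> (\<forall>n. \<forall>t\<in>I. nderiv n f differentiable (at t))"

definition spacelike_frontal :: "real set \<Rightarrow> (real \<Rightarrow> vec2) \<Rightarrow> (real \<Rightarrow> vec2) \<Rightarrow> bool" where
  "spacelike_frontal I a \<nu> \<longleftrightarrow> smooth_on I a \<and> smooth_on I \<nu> \<and> (\<forall>t\<in>I. \<nu> t \<in> H1) \<and>
     (\<forall>t\<in>I. mink (vector_derivative a (at t)) (\<nu> t) = 0)"

definition timelike_frontal :: "real set \<Rightarrow> (real \<Rightarrow> vec2) \<Rightarrow> (real \<Rightarrow> vec2) \<Rightarrow> bool" where
  "timelike_frontal I a \<nu> \<longleftrightarrow> smooth_on I a \<and> smooth_on I \<nu> \<and> (\<forall>t\<in>I. \<nu> t \<in> S11) \<and>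
     (\<forall>t\<in>I. mink (vector_derivative a (at t)) (\<nu> t) = 0)"

definition frame_compl :: "real set \<Rightarrow> (real \<Rightarrow> vec2) \<Rightarrow> (real \<Rightarrow> vec2) \<Rightarrow> vec2 set \<Rightarrow> bool" where
  "frame_compl I \<nu> \<mu> S \<longleftrightarrow> smooth_on I \<mu> \<and> (\<forall>t\<in>I. \<mu> t \<in> S) \<and> (\<forall>t\<in>I. mink (\<mu> t) (\<nu> t) = 0)"

definition beta :: "(real \<Rightarrow> vec2) \<Rightarrow> (real \<Rightarrow> vec2) \<Rightarrow> real \<Rightarrow> real" where
  "beta a \<mu> t = eps (\<mu> t) * mink (\<mu> t) (vector_derivative a (at t))"

text \<open>Pseudo-circle C_(a, s r) with s = 1 or s = -1:
  <x - a, x - a> = s r^2.\<close>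
definition pcircle :: "vec2 \<Rightarrow> real \<Rightarrow> real \<Rightarrow> vec2 set" where
  "pcircle c s \<rho> = {x. mink (x - c) (x - c) = s * \<rho>\<^sup>2}"

definition is_envelope :: "real set \<Rightarrow> (real \<Rightarrow> vec2) \<Rightarrow> real \<Rightarrow> (real \<Rightarrow> real) \<Rightarrow> (real \<Rightarrow> vec2) \<Rightarrow> bool" where
  "is_envelope I a s r f \<longleftrightarrow> smooth_on I f \<and>
     (\<forall>t\<in>I. f t \<in> pcircle (a t) s (r t)) \<and>
     (\<forall>t\<in>I. mink (vector_derivative f (at t)) (f t - a t) = 0)"

definition creates_envelope :: "real set \<Rightarrow> (real \<Rightarrow> vec2) \<Rightarrow> real \<Rightarrow> (real \<Rightarrow> real) \<Rightarrow> bool" where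
  "creates_envelope I a s r \<longleftrightarrow> (\<exists>f. is_envelope I a s r f)"

definition creative_pos :: "real set \<Rightarrow> (real \<Rightarrow> vec2) \<Rightarrow> (real \<Rightarrow> vec2) \<Rightarrow> (real \<Rightarrow> real) \<Rightarrow> bool" where
  "creative_pos I a \<mu> r \<longleftrightarrow> (\<exists>\<nu>t. smooth_on I \<nu>t \<and> (\<forall>t\<in>I. \<nu>t t \<in> S11) \<and>
     (\<forall>t\<in>I. deriv r t + beta a \<mu> t * mink (\<nu>t t) (\<mu> t) = 0))"

definition creative_neg :: "real set \<Rightarrow> (real \<Rightarrow> vec2) \<Rightarrow> (real \<Rightarrow> vec2) \<Rightarrow> (real \<Rightarrow> real) \<Rightarrow> bool" where
  "creative_neg I a \<mu> r \<longleftrightarrow> (\<exists>\<nu>t. smooth_on I \<nu>t \<and> (\<forall>t\<in>I. \<nu>t t \<in> H1) \<and>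
     (\<forall>t\<in>I. deriv r t - beta a \<mu> t * mink (\<nu>t t) (\<mu> t) = 0))"

end

theory Submission
  imports Defs
begin

lemma alg:
  fixes m1 m2 n1 n2 x y e :: real
  assumes "-m1*n1+m2*n2 = 0" "-m1*m1+m2*m2 = e" "-n1*n1+n2*n2 = -e" "e = 1 \<or> e = -1"
    "-x*n1+y*n2 = 0"
  shows "x = e*(-m1*x+m2*y)*m1 \<and> y = e*(-m1*x+m2*y)*m2"
proof -
  define c where "c = e*(-m1*x+m2*y)"
  define d1 where "d1 = x - c*m1"
  define d2 where "d2 = y - c*m2"
  have ee: "e*e = 1" using assms(4) by auto
  have h1: "-d1*n1+d2*n2 = 0" unfolding d1_def d2_def using assms(1,5) by (simp add: algebra_simps)
  have h2: "-d1*m1+d2*m2 = 0" unfolding d1_def d2_def c_def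
  proof -
    have "-(x - e*(-m1*x+m2*y)*m1)*m1+(y - e*(-m1*x+m2*y)*m2)*m2 = (-m1*x+m2*y) - e*(-m1*x+m2*y)*(-m1*m1+m2*m2)"
      by (simp add: algebra_simps)
    also have "\<dots> = (-m1*x+m2*y) - e*(-m1*x+m2*y)*e" using assms(2) by simp
    also have "\<dots> = (1 - e*e)*(-m1*x+m2*y)" by (simp add: algebra_simps)
    also have "\<dots> = 0" using ee by simp
    finally show "-(x - e*(-m1*x+m2*y)*m1)*m1+(y - e*(-m1*x+m2*y)*m2)*m2 = 0" .
  qed
  have det: "(m1*n2 - m2*n1)^2 = 1"
  proof -
    have "(m1*n2 - m2*n1)^2 = (-m1*n1+m2*n2)^2 - (-m1*m1+m2*m2)*(-n1*n1+n2*n2)"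
      by (simp add: power2_eq_square algebra_simps)
    then show ?thesis using assms ee by simp
  qed
  have "d1*(m1*n2 - m2*n1) = 0"
  proof -
    have "d1*(m1*n2 - m2*n1) = -(-d1*m1+d2*m2)*n2 + (-d1*n1+d2*n2)*m2" by (simp add: algebra_simps)
    then show ?thesis using h1 h2 by simp
  qed
  moreover have "d2*(m1*n2 - m2*n1) = 0"
  proof -
    have "d2*(m1*n2 - m2*n1) = (-d1*n1+d2*n2)*m1 - (-d1*m1+d2*m2)*n1" by (simp add: algebra_simps)
    then show ?thesis using h1 h2 by simp
  qed
  moreover have "m1*n2 - m2*n1 \<noteq> 0" using det by auto
  ultimately have "d1 = 0" "d2 = 0" by auto
  then show ?thesis unfolding d1_def d2_def c_def by simp
qed


fun ks :: "nat \<Rightarrow> real set \<Rightarrow> (real \<Rightarrow> 'a::real_normed_vector) \<Rightarrow> bool" where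
  "ks 0 I h = (\<forall>t\<in>I. h differentiable at t)"
| "ks (Suc n) I h = ((\<forall>t\<in>I. h differentiable at t) \<and> ks n I (\<lambda>t. vector_derivative h (at t)))"

lemma ks_nderiv: "ks n I h \<longleftrightarrow> (\<forall>k\<le>n. \<forall>t\<in>I. nderiv k h differentiable at t)"
proof (induction n arbitrary: h)
  case 0
  then show ?case by (simp add: nderiv_def)
next
  case (Suc n)
  have e: "nderiv (Suc k) h = nderiv k (\<lambda>t. vector_derivative h (at t))" for k
    unfolding nderiv_def by (simp add: funpow_Suc_right del: funpow.simps)
  have "(\<forall>k\<le>Suc n. \<forall>t\<in>I. nderiv k h differentiable at t) \<longleftrightarrow>
        (\<forall>t\<in>I. nderiv 0 h differentiable at t) \<and> (\<forall>k\<le>n. \<forall>t\<in>I. nderiv (Suc k) h differentiable at t)"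
    by (metis Suc_le_mono not0_implies_Suc zero_le)
  have "ks (Suc n) I h \<longleftrightarrow> (\<forall>t\<in>I. h differentiable at t) \<and> (\<forall>k\<le>n. \<forall>t\<in>I. nderiv k (\<lambda>t. vector_derivative h (at t)) differentiable at t)"
    using Suc.IH[of "\<lambda>t. vector_derivative h (at t)"] by simp
  moreover have "nderiv 0 h = h" by (simp add: nderiv_def)
  ultimately show ?case using \<open>(\<forall>k\<le>Suc n. _) \<longleftrightarrow> _\<close> by (simp only: e)
qed

lemma smooth_ks: "smooth_on I h \<longleftrightarrow> (\<forall>n. ks n I h)"
  unfolding smooth_on_def ks_nderiv by blast

lemma ks_Suc_mono: "ks (Suc n) I h \<Longrightarrow> ks n I h"
  by (induction n arbitrary: h) auto

lemma ks_diff: "ks n I h \<Longrightarrow> t \<in> I \<Longrightarrow> h differentiable at t"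
  by (cases n) auto

lemma ks_vd: "ks n I h \<Longrightarrow> t \<in> I \<Longrightarrow> (h has_vector_derivative vector_derivative h (at t)) (at t)"
  using ks_diff vector_derivative_works by blast

lemma ks_cong: "open I \<Longrightarrow> ks n I h \<Longrightarrow> (\<And>t. t\<in>I \<Longrightarrow> h t = k t) \<Longrightarrow> ks n I k"
proof (induction n arbitrary: h k)
  case 0
  then show ?case
    by (auto intro: differentiableI_vector has_vector_derivative_transform_within_open[OF ks_vd[OF "0.prems"(2)]])
next
  case (Suc n)
  have d: "(k has_vector_derivative vector_derivative h (at t)) (at t)" if "t \<in> I" for t
    using has_vector_derivative_transform_within_open[OF ks_vd[OF Suc.prems(2) that] Suc.prems(1) that] Suc.prems(3) by auto
  have "ks n I (\<lambda>t. vector_derivative h (at t))" using Suc.prems(2) by simp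
  from Suc.IH[OF Suc.prems(1) this]
  have "ks n I (\<lambda>t. vector_derivative k (at t))"
    by (metis d vector_derivative_at)
  then show ?case using d differentiableI_vector by auto
qed

lemma ks_const: "ks n I (\<lambda>t. c)"
proof (induction n arbitrary: c)
  case (Suc n)
  have "vector_derivative (\<lambda>t. c) (at t) = 0" for t by (simp add: vector_derivative_at)
  then show ?case using Suc by simp
qed simp

lemma ks_add: "open I \<Longrightarrow> ks n I f \<Longrightarrow> ks n I g \<Longrightarrow> ks n I (\<lambda>t. f t + g t)"
proof (induction n arbitrary: f g)
  case 0
  then show ?case by auto
next
  case (Suc n)
  have d: "((\<lambda>t. f t + g t) has_vector_derivative vector_derivative f (at t) + vector_derivative g (at t)) (at t)" if "t \<in> I" for t
    using ks_vd[OF Suc.prems(2) that] ks_vd[OF Suc.prems(3) that] by (rule has_vector_derivative_add)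
  have "ks n I (\<lambda>t. vector_derivative f (at t) + vector_derivative g (at t))"
    using Suc by auto
  then have "ks n I (\<lambda>t. vector_derivative (\<lambda>t. f t + g t) (at t))"
    by (rule ks_cong[OF Suc.prems(1)]) (metis d vector_derivative_at)
  then show ?case using d differentiableI_vector by auto
qed

lemma ks_bil:
  assumes bb: "bounded_bilinear pr"
  shows "open I \<Longrightarrow> ks n I f \<Longrightarrow> ks n I g \<Longrightarrow> ks n I (\<lambda>t. pr (f t) (g t))"
proof (induction n arbitrary: f g)
  case 0
  have "(\<lambda>t. pr (f t) (g t)) differentiable at t" if "t \<in> I" for t
    using bounded_bilinear.has_vector_derivative[OF bb ks_vd[OF "0.prems"(2) that] ks_vd[OF "0.prems"(3) that]]
    by (rule differentiableI_vector)
  then show ?case by simp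
next
  case (Suc n)
  have d: "((\<lambda>t. pr (f t) (g t)) has_vector_derivative
     (pr (f t) (vector_derivative g (at t)) + pr (vector_derivative f (at t)) (g t))) (at t)" if "t \<in> I" for t
    using bounded_bilinear.has_vector_derivative[OF bb ks_vd[OF Suc.prems(2) that] ks_vd[OF Suc.prems(3) that]] .
  have "ks n I (\<lambda>t. pr (f t) (vector_derivative g (at t)) + pr (vector_derivative f (at t)) (g t))"
    using Suc.prems ks_Suc_mono[OF Suc.prems(2)] ks_Suc_mono[OF Suc.prems(3)]
    by (intro ks_add Suc.IH) auto
  then have "ks n I (\<lambda>t. vector_derivative (\<lambda>t. pr (f t) (g t)) (at t))"
    by (rule ks_cong[OF Suc.prems(1)]) (metis d vector_derivative_at)
  then show ?case using d differentiableI_vector by auto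
qed

lemma ks_inverse:
  fixes r :: "real \<Rightarrow> real"
  assumes "open I" "\<And>n. ks n I r" "\<And>t. t \<in> I \<Longrightarrow> r t > 0"
  shows "ks n I (\<lambda>t. inverse (r t))"
proof (induction n)
  have d: "((\<lambda>t. inverse (r t)) has_vector_derivative
     (vector_derivative r (at t) * ((-1) * (inverse (r t) * inverse (r t))))) (at t)" if "t \<in> I" for t
  proof -
    have "(r has_field_derivative vector_derivative r (at t)) (at t)"
      using ks_vd[OF assms(2) that] has_real_derivative_iff_has_vector_derivative by blast
    from DERIV_inverse_fun[OF this] assms(3)[OF that]
    have "((\<lambda>t. inverse (r t)) has_field_derivative - (vector_derivative r (at t) * (inverse (r t) * inverse (r t)))) (at t)"
      by auto
    moreover have "- (vector_derivative r (at t) * (inverse (r t) * inverse (r t))) = vector_derivative r (at t) * ((-1) * (inverse (r t) * inverse (r t)))"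
      by (simp add: power2_eq_square)
    ultimately show ?thesis using has_real_derivative_iff_has_vector_derivative by metis
  qed
  {
    case 0
    then show ?case using d differentiableI_vector by auto
  next
    case (Suc n)
    have "ks n I (\<lambda>t. vector_derivative r (at t) * ((-1) * (inverse (r t) * inverse (r t))))"
      using Suc assms(1) assms(2)[of "Suc n"]
      by (intro ks_bil[OF bounded_bilinear_mult] ks_const) auto
    then have "ks n I (\<lambda>t. vector_derivative (\<lambda>t. inverse (r t)) (at t))"
      by (rule ks_cong[OF assms(1)]) (metis d vector_derivative_at)
    then show ?case using d differentiableI_vector by auto
  }
qed


lemma bb_mink: "bounded_bilinear mink"
proof
  fix a a' b b' :: vec2 and r :: real
  show "mink (a + a') b = mink a b + mink a' b" by (simp add: mink_def algebra_simps)
  show "mink a (b + b') = mink a b + mink a b'" by (simp add: mink_def algebra_simps)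
  show "mink (r *\<^sub>R a) b = r *\<^sub>R mink a b" by (simp add: mink_def algebra_simps)
  show "mink a (r *\<^sub>R b) = r *\<^sub>R mink a b" by (simp add: mink_def algebra_simps)
next
  show "\<exists>K. \<forall>a b. norm (mink a b) \<le> norm a * norm b * K"
  proof (intro exI allI)
    fix a b :: vec2
    have "norm (mink a b) \<le> \<bar>fst a\<bar> * \<bar>fst b\<bar> + \<bar>snd a\<bar> * \<bar>snd b\<bar>"
      by (simp add: mink_def abs_mult[symmetric])
    also have "\<dots> \<le> norm a * norm b + norm a * norm b"
      by (intro add_mono mult_mono) (use norm_fst_le[of "fst a" "snd a"] norm_fst_le[of "fst b" "snd b"] norm_snd_le[of "snd a" "fst a"] norm_snd_le[of "snd b" "fst b"] in auto)
    finally show "norm (mink a b) \<le> norm a * norm b * 2" by simp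
  qed
qed

lemma mink_sym: "mink x y = mink y x" by (simp add: mink_def algebra_simps)
lemma mink_add_l: "mink (x + y) z = mink x z + mink y z" by (simp add: mink_def algebra_simps)
lemma mink_add_r: "mink z (x + y) = mink z x + mink z y" by (simp add: mink_def algebra_simps)
lemma mink_diff_l: "mink (x - y) z = mink x z - mink y z" by (simp add: mink_def algebra_simps)
lemma mink_diff_r: "mink z (x - y) = mink z x - mink z y" by (simp add: mink_def algebra_simps)
lemma mink_scale_l: "mink (c *\<^sub>R x) z = c * mink x z" by (simp add: mink_def algebra_simps)
lemma mink_scale_r: "mink z (c *\<^sub>R x) = c * mink z x" by (simp add: mink_def algebra_simps)
lemmas mink_lin = mink_add_l mink_add_r mink_diff_l mink_diff_r mink_scale_l mink_scale_r

lemma sm_bil: "bounded_bilinear pr \<Longrightarrow> open I \<Longrightarrow> smooth_on I f \<Longrightarrow> smooth_on I g \<Longrightarrow> smooth_on I (\<lambda>t. pr (f t) (g t))"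
  unfolding smooth_ks using ks_bil by blast

lemma sm_add: "open I \<Longrightarrow> smooth_on I f \<Longrightarrow> smooth_on I g \<Longrightarrow> smooth_on I (\<lambda>t. f t + g t)"
  unfolding smooth_ks using ks_add by blast

lemma sm_cong: "open I \<Longrightarrow> smooth_on I f \<Longrightarrow> (\<And>t. t \<in> I \<Longrightarrow> f t = g t) \<Longrightarrow> smooth_on I g"
  unfolding smooth_ks using ks_cong by blast

lemma sm_diff: "open I \<Longrightarrow> smooth_on I f \<Longrightarrow> smooth_on I g \<Longrightarrow> smooth_on I (\<lambda>t. f t - g t)"
proof -
  assume h: "open I" "smooth_on I f" "smooth_on I g"
  have "smooth_on I (\<lambda>t. (-1::real) *\<^sub>R g t)"
    using sm_bil[OF bounded_bilinear_scaleR h(1) _ h(3), of "\<lambda>t. -1"] smooth_ks ks_const by blast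
  from sm_add[OF h(1,2) this] show ?thesis by (rule sm_cong[OF h(1)]) simp
qed

lemma sm_inverse: "open I \<Longrightarrow> smooth_on I r \<Longrightarrow> (\<And>t. t \<in> I \<Longrightarrow> (r t::real) > 0) \<Longrightarrow> smooth_on I (\<lambda>t. inverse (r t))"
  unfolding smooth_ks using ks_inverse by blast

lemma sm_vd: "smooth_on I h \<Longrightarrow> t \<in> I \<Longrightarrow> (h has_vector_derivative vector_derivative h (at t)) (at t)"
  unfolding smooth_ks using ks_vd by blast

lemma sm_deriv: "smooth_on I (r::real\<Rightarrow>real) \<Longrightarrow> t \<in> I \<Longrightarrow> deriv r t = vector_derivative r (at t)
   \<and> (r has_field_derivative vector_derivative r (at t)) (at t)"
  using sm_vd has_real_derivative_iff_has_vector_derivative DERIV_imp_deriv by metis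

lemma main_gen:
  fixes I :: "real set" and a \<mu> :: "real \<Rightarrow> vec2" and r :: "real \<Rightarrow> real" and s :: real
  assumes I: "open I" and sa: "smooth_on I a" and sr: "smooth_on I r" and rp: "\<And>t. t \<in> I \<Longrightarrow> r t > 0"
    and D: "\<And>t. t \<in> I \<Longrightarrow> vector_derivative a (at t) = beta a \<mu> t *\<^sub>R \<mu> t"
  shows "creates_envelope I a s r \<longleftrightarrow> (\<exists>n. smooth_on I n \<and> (\<forall>t\<in>I. mink (n t) (n t) = s) \<and>
          (\<forall>t\<in>I. s * deriv r t + beta a \<mu> t * mink (n t) (\<mu> t) = 0))"
proof
  assume "creates_envelope I a s r"
  then obtain f where f: "is_envelope I a s r f" unfolding creates_envelope_def by blast
  have sf: "smooth_on I f" and fc: "\<And>t. t \<in> I \<Longrightarrow> mink (f t - a t) (f t - a t) = s * (r t)\<^sup>2"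
    and fo: "\<And>t. t \<in> I \<Longrightarrow> mink (vector_derivative f (at t)) (f t - a t) = 0"
    using f unfolding is_envelope_def pcircle_def by auto
  define n where "n = (\<lambda>t. inverse (r t) *\<^sub>R (f t - a t))"
  have sn: "smooth_on I n" unfolding n_def
    by (intro sm_bil[OF bounded_bilinear_scaleR I] sm_inverse sm_diff I sf sa sr rp)
  moreover have "\<forall>t\<in>I. mink (n t) (n t) = s"
  proof
    fix t assume t: "t \<in> I"
    have "mink (n t) (n t) = inverse (r t) * inverse (r t) * (s * (r t)\<^sup>2)"
      unfolding n_def mink_scale_l mink_scale_r fc[OF t] by simp
    also have "\<dots> = s" using rp[OF t] by (simp add: power2_eq_square field_simps)
    finally show "mink (n t) (n t) = s" .
  qed
  moreover have "\<forall>t\<in>I. s * deriv r t + beta a \<mu> t * mink (n t) (\<mu> t) = 0"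
  proof
    fix t assume t: "t \<in> I"
    define R' where "R' = vector_derivative r (at t)"
    define h' where "h' = vector_derivative f (at t) - vector_derivative a (at t)"
    have dr: "deriv r t = R'" "(r has_field_derivative R') (at t)" using sm_deriv[OF sr t] R'_def by auto
    have hd: "((\<lambda>t. f t - a t) has_vector_derivative h') (at t)"
      unfolding h'_def by (intro has_vector_derivative_diff sm_vd[OF sf t] sm_vd[OF sa t])
    have g1: "((\<lambda>t. mink (f t - a t) (f t - a t)) has_vector_derivative
         (mink (f t - a t) h' + mink h' (f t - a t))) (at t)"
      using bounded_bilinear.has_vector_derivative[OF bb_mink hd hd] .
    have "((\<lambda>t. s * (r t * r t)) has_field_derivative s * (r t * R' + R' * r t)) (at t)"
      by (auto intro!: derivative_eq_intros dr(2))
    then have "((\<lambda>t. s * (r t * r t)) has_vector_derivative s * (r t * R' + R' * r t)) (at t)"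
      using has_real_derivative_iff_has_vector_derivative by blast
    then have g2: "((\<lambda>t. mink (f t - a t) (f t - a t)) has_vector_derivative s * (r t * R' + R' * r t)) (at t)"
      by (rule has_vector_derivative_transform_within_open[OF _ I t]) (simp add: fc power2_eq_square)
    have eq: "mink (f t - a t) h' + mink h' (f t - a t) = s * (r t * R' + R' * r t)"
      using vector_derivative_at[OF g1] vector_derivative_at[OF g2] by simp
    have "mink h' (f t - a t) = - beta a \<mu> t * mink (\<mu> t) (f t - a t)"
      unfolding h'_def mink_diff_l fo[OF t] D[OF t] mink_scale_l by simp
    with eq have k: "- beta a \<mu> t * mink (f t - a t) (\<mu> t) = s * r t * R'"
      by (simp add: mink_sym[of h'] mink_sym[of "\<mu> t"] algebra_simps)
    have "s * deriv r t + beta a \<mu> t * mink (n t) (\<mu> t) = s * R' + inverse (r t) * (beta a \<mu> t * mink (f t - a t) (\<mu> t))"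
      unfolding n_def mink_scale_l dr(1) by simp
    also have "\<dots> = s * R' - inverse (r t) * (s * r t * R')"
    proof -
      have k': "beta a \<mu> t * mink (f t - a t) (\<mu> t) = - (s * r t * R')" using k by linarith
      show ?thesis by (simp only: k')
    qed
    also have "\<dots> = 0" using rp[OF t] by (simp add: field_simps)
    finally show "s * deriv r t + beta a \<mu> t * mink (n t) (\<mu> t) = 0" .
  qed
  ultimately show "\<exists>n. smooth_on I n \<and> (\<forall>t\<in>I. mink (n t) (n t) = s) \<and>
          (\<forall>t\<in>I. s * deriv r t + beta a \<mu> t * mink (n t) (\<mu> t) = 0)" by blast
next
  assume "\<exists>n. smooth_on I n \<and> (\<forall>t\<in>I. mink (n t) (n t) = s) \<and>
          (\<forall>t\<in>I. s * deriv r t + beta a \<mu> t * mink (n t) (\<mu> t) = 0)"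
  then obtain n where sn: "smooth_on I n" and nn: "\<And>t. t \<in> I \<Longrightarrow> mink (n t) (n t) = s"
    and cr: "\<And>t. t \<in> I \<Longrightarrow> s * deriv r t + beta a \<mu> t * mink (n t) (\<mu> t) = 0" by blast
  define f where "f = (\<lambda>t. a t + r t *\<^sub>R n t)"
  have "smooth_on I f" unfolding f_def
    by (intro sm_add I sa sm_bil[OF bounded_bilinear_scaleR I] sr sn)
  moreover have "\<forall>t\<in>I. f t \<in> pcircle (a t) s (r t)"
    using nn by (simp add: f_def pcircle_def mink_scale_l mink_scale_r power2_eq_square)
  moreover have "\<forall>t\<in>I. mink (vector_derivative f (at t)) (f t - a t) = 0"
  proof
    fix t assume t: "t \<in> I"
    define R' where "R' = vector_derivative r (at t)"
    define N' where "N' = vector_derivative n (at t)"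
    have dr: "deriv r t = R'" "(r has_field_derivative R') (at t)" using sm_deriv[OF sr t] R'_def by auto
    have nd: "(n has_vector_derivative N') (at t)" using sm_vd[OF sn t] N'_def by simp
    have fd: "(f has_vector_derivative vector_derivative a (at t) + (r t *\<^sub>R N' + R' *\<^sub>R n t)) (at t)"
      unfolding f_def by (intro has_vector_derivative_add sm_vd[OF sa t] has_vector_derivative_scaleR dr(2) nd)
    have g1: "((\<lambda>t. mink (n t) (n t)) has_vector_derivative (mink (n t) N' + mink N' (n t))) (at t)"
      using bounded_bilinear.has_vector_derivative[OF bb_mink nd nd] .
    have "((\<lambda>t. s) has_vector_derivative 0) (at t)" by simp
    then have g2: "((\<lambda>t. mink (n t) (n t)) has_vector_derivative 0) (at t)"
      by (rule has_vector_derivative_transform_within_open[OF _ I t]) (simp add: nn)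
    have z: "mink N' (n t) = 0"
      using vector_derivative_at[OF g1] vector_derivative_at[OF g2] mink_sym[of N'] by simp
    have "mink (vector_derivative f (at t)) (f t - a t)
        = r t * (beta a \<mu> t * mink (\<mu> t) (n t) + r t * mink N' (n t) + R' * mink (n t) (n t))"
      unfolding vector_derivative_at[OF fd] D[OF t] by (simp add: f_def mink_lin algebra_simps)
    also have "\<dots> = r t * (s * deriv r t + beta a \<mu> t * mink (n t) (\<mu> t))"
      using z nn[OF t] dr(1) mink_sym[of "\<mu> t"] by (simp add: algebra_simps)
    also have "\<dots> = 0" using cr[OF t] by simp
    finally show "mink (vector_derivative f (at t)) (f t - a t) = 0" .
  qed
  ultimately show "creates_envelope I a s r" unfolding creates_envelope_def is_envelope_def by blast
qed


lemma decomp: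
  assumes "mink V n = 0" "mink m n = 0" "mink m m = e" "mink n n = -e" "e = 1 \<or> e = -1"
  shows "V = (eps m * mink m V) *\<^sub>R m"
proof -
  have ep: "eps m = e" using assms(3,5) by (auto simp: eps_def)
  have "fst V = e*(-fst m*fst V+snd m * snd V) * fst m \<and> snd V = e*(-fst m*fst V+snd m * snd V) * snd m"
    using assms by (intro alg[of "fst m" "fst n" "snd m" "snd n" e]) (auto simp: mink_def mult.commute)
  then show ?thesis by (simp add: prod_eq_iff ep mink_def)
qed

theorem theorem1:
  fixes I :: "real set" and a \<nu> \<mu> :: "real \<Rightarrow> real \<times> real" and r :: "real \<Rightarrow> real"
  assumes "open I" and "is_interval I" and "I \<noteq> {}"
    and "(spacelike_frontal I a \<nu> \<and> frame_compl I \<nu> \<mu> S11)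
         \<or> (timelike_frontal I a \<nu> \<and> frame_compl I \<nu> \<mu> H1)"
    and "smooth_on I r" and "\<forall>t\<in>I. r t > 0"
  shows "(creates_envelope I a 1 r \<longleftrightarrow> creative_pos I a \<mu> r)
       \<and> (creates_envelope I a (-1) r \<longleftrightarrow> creative_neg I a \<mu> r)"
proof -
  have sa: "smooth_on I a" using assms(4) by (auto simp: spacelike_frontal_def timelike_frontal_def)
  have D: "vector_derivative a (at t) = beta a \<mu> t *\<^sub>R \<mu> t" if t: "t \<in> I" for t
    using assms(4) t unfolding beta_def
    by (auto simp: spacelike_frontal_def timelike_frontal_def frame_compl_def S11_def H1_def
        intro!: decomp[of _ "\<nu> t"])
  have rp: "\<And>t. t \<in> I \<Longrightarrow> r t > 0" using assms(6) by blast
  note M = main_gen[OF assms(1) sa assms(5) rp D]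
  have e: "\<And>x y::real. (-1 * x + y = 0) = (x - y = 0)" by linarith
  show ?thesis
    unfolding creative_pos_def creative_neg_def S11_def H1_def
    using M[where s=1] M[where s="-1"]
    by (simp add: e) (metis (no_types, opaque_lifting))
qed

end
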